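(* Let $\vartheta_1$ be the random Fibonacci substitution, let $p\ge 0$ and let $u$ be a finite word over $\{a,b\}$. If either of the sets $\vartheta_1^p(a)\,u\,ab$ or $\vartheta_1^p(a)\,u\,ba$ contains a $\vartheta_1$-legal word, then both sets $\vartheta_1^p(a)\,\vartheta_1(u)\,ab$ and $\vartheta_1^p(a)\,\vartheta_1(u)\,\vartheta_1(b)\,ba$ contain $\vartheta_1$-legal words.
   Context: The random Fibonacci substitution is $\vartheta_1\colon a\mapsto\{ab,ba\},\ b\mapsto\{a\}$, extended to words by set concatenation $\vartheta_1(w_1\cdots w_k)=\vartheta_1(w_1)\cdots\vartheta_1(w_k)$ (with $AB=\{xy\mid x\in A,y\in B\}$, a single word being identified with the singleton set) and to sets of words by unions; $\vartheta_1^p$ is the $p$-fold iterate ($\vartheta_1^0(a)=\{a\}$). A word is $\vartheta_1$-legal if it is a subword of some element of $\vartheta_1^k(x)$ for some $k\ge0$ and letter $x$. *)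

theory Defs
  imports Main "HOL-Library.Sublist"
begin

datatype letter = a | b

type_synonym word = "letter list"

definition setcat :: "word set \<Rightarrow> word set \<Rightarrow> word set" where
  "setcat A B = {x @ y | x y. x \<in> A \<and> y \<in> B}"

fun theta_letter :: "letter \<Rightarrow> word set" where
  "theta_letter a = {[a, b], [b, a]}"
| "theta_letter b = {[a]}"

fun theta_word :: "word \<Rightarrow> word set" where
  "theta_word [] = {[]}"
| "theta_word (x # xs) = setcat (theta_letter x) (theta_word xs)"

definition theta_set :: "word set \<Rightarrow> word set" where
  "theta_set S = (\<Union>w\<in>S. theta_word w)"

definition theta_pow :: "nat \<Rightarrow> word set \<Rightarrow> word set" where
  "theta_pow p S = (theta_set ^^ p) S"

definition legal :: "word \<Rightarrow> bool" where
  "legal w \<longleftrightarrow> (\<exists>k x. \<exists>v \<in> theta_pow k {[x]}. sublist w v)"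

end

theory Submission
  imports Defs
begin

lemma setcat_mem: "x \<in> A \<Longrightarrow> y \<in> B \<Longrightarrow> x @ y \<in> setcat A B"
  unfolding setcat_def by blast

lemma setcat_assoc: "setcat A (setcat B C) = setcat (setcat A B) C"
  unfolding setcat_def by (auto, metis append.assoc, metis append.assoc)

lemma theta_word_append: "theta_word (xs @ ys) = setcat (theta_word xs) (theta_word ys)"
proof (induction xs)
  case Nil then show ?case by (auto simp: setcat_def)
next
  case (Cons x xs) then show ?case by (simp add: setcat_assoc)
qed

lemma theta_word_ne: "\<exists>y. y \<in> theta_word v"
proof (induction v)
  case Nil then show ?case by auto
next
  case (Cons x v)
  then obtain y where "y \<in> theta_word v" by auto
  moreover obtain z where "z \<in> theta_letter x" by (cases x) auto
  ultimately show ?case by (auto intro: setcat_mem)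
qed

lemma theta_set_setcat: "theta_set (setcat A B) = setcat (theta_set A) (theta_set B)"
proof
  show "theta_set (setcat A B) \<subseteq> setcat (theta_set A) (theta_set B)"
  proof
    fix y assume "y \<in> theta_set (setcat A B)"
    then obtain x z where "x \<in> A" "z \<in> B" "y \<in> theta_word (x @ z)"
      unfolding theta_set_def setcat_def by blast
    then obtain y1 y2 where "y = y1 @ y2" "y1 \<in> theta_word x" "y2 \<in> theta_word z"
      by (auto simp: theta_word_append setcat_def)
    then show "y \<in> setcat (theta_set A) (theta_set B)"
      using \<open>x \<in> A\<close> \<open>z \<in> B\<close> unfolding theta_set_def by (blast intro: setcat_mem)
  qed
next
  show "setcat (theta_set A) (theta_set B) \<subseteq> theta_set (setcat A B)"
  proof
    fix y assume "y \<in> setcat (theta_set A) (theta_set B)"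
    then obtain x z y1 y2 where "x \<in> A" "z \<in> B" "y = y1 @ y2" "y1 \<in> theta_word x" "y2 \<in> theta_word z"
      unfolding theta_set_def setcat_def by blast
    then have "y \<in> theta_word (x @ z)" "x @ z \<in> setcat A B"
      by (auto simp: theta_word_append intro: setcat_mem)
    then show "y \<in> theta_set (setcat A B)" unfolding theta_set_def by blast
  qed
qed

lemma theta_set_Un: "theta_set (A \<union> B) = theta_set A \<union> theta_set B"
  unfolding theta_set_def by auto

lemma theta_pow_Suc: "theta_pow (Suc p) S = theta_set (theta_pow p S)"
  unfolding theta_pow_def by simp

lemma theta_pow_Suc': "theta_pow (Suc p) S = theta_pow p (theta_set S)"
  unfolding theta_pow_def by (simp add: funpow_Suc_right del: funpow.simps)

lemma theta_pow_setcat: "theta_pow p (setcat A B) = setcat (theta_pow p A) (theta_pow p B)"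
  by (induction p) (auto simp: theta_pow_Suc theta_set_setcat, auto simp: theta_pow_def)

lemma theta_pow_Un: "theta_pow p (A \<union> B) = theta_pow p A \<union> theta_pow p B"
  by (induction p) (auto simp: theta_pow_Suc theta_set_Un, auto simp: theta_pow_def)

lemma theta_set_a: "theta_set {[a]} = setcat {[a]} {[b]} \<union> setcat {[b]} {[a]}"
  unfolding theta_set_def by (auto simp: setcat_def)

lemma theta_set_b: "theta_set {[b]} = {[a]}"
  unfolding theta_set_def by (auto simp: setcat_def)

lemma pow_a: "theta_pow (Suc p) {[a]} =
   setcat (theta_pow p {[a]}) (theta_pow p {[b]}) \<union> setcat (theta_pow p {[b]}) (theta_pow p {[a]})"
  by (simp add: theta_pow_Suc' theta_set_a theta_pow_Un theta_pow_setcat)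

lemma pow_b: "theta_pow (Suc p) {[b]} = theta_pow p {[a]}"
  by (simp add: theta_pow_Suc' theta_set_b)

lemma pow_step: "v \<in> theta_pow p S \<Longrightarrow> y \<in> theta_word v \<Longrightarrow> y \<in> theta_pow (Suc p) S"
  by (auto simp: theta_pow_Suc theta_set_def)

lemma key:
  "v \<in> theta_pow p {[a]} \<Longrightarrow>
    (\<exists>z1 z2. z1 @ z2 \<in> theta_word v \<and> z1 \<in> theta_pow p {[b]} \<and> z2 \<in> theta_pow p {[a]})
  \<and> (\<exists>z1 z2. z1 @ z2 \<in> theta_word v \<and> z1 \<in> theta_pow p {[a]} \<and> z2 \<in> theta_pow p {[b]})"
proof (induction p arbitrary: v)
  case 0
  then have "v = [a]" by (simp add: theta_pow_def)
  then show ?case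
    by (auto simp: theta_pow_def setcat_def intro!: exI[of _ "[a]"] exI[of _ "[b]"])
next
  case (Suc p)
  from Suc.prems[unfolded pow_a] obtain s t where
    st: "v = s @ t" and
    cases: "(s \<in> theta_pow p {[a]} \<and> t \<in> theta_pow p {[b]}) \<or>
            (s \<in> theta_pow p {[b]} \<and> t \<in> theta_pow p {[a]})"
    unfolding setcat_def by blast
  have thv: "theta_word v = setcat (theta_word s) (theta_word t)" by (simp add: st theta_word_append)
  from cases show ?case
  proof
    assume H: "s \<in> theta_pow p {[a]} \<and> t \<in> theta_pow p {[b]}"
    obtain w where w: "w \<in> theta_word t" using theta_word_ne by blast
    have wa: "w \<in> theta_pow p {[a]}" using pow_step[OF conjunct2[OF H] w] pow_b by simp
    from Suc.IH[OF conjunct1[OF H]] obtain z1 z2 where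
      z: "z1 @ z2 \<in> theta_word s" "z1 \<in> theta_pow p {[a]}" "z2 \<in> theta_pow p {[b]}" by blast
    from Suc.IH[OF conjunct1[OF H]] obtain q1 q2 where
      q: "q1 @ q2 \<in> theta_word s" "q1 \<in> theta_pow p {[b]}" "q2 \<in> theta_pow p {[a]}" by blast
    have 1: "z1 @ (z2 @ w) \<in> theta_word v" using z w thv setcat_mem by fastforce
    have 2: "z2 @ w \<in> theta_pow (Suc p) {[a]}" unfolding pow_a using z wa setcat_mem by blast
    have 3: "z1 \<in> theta_pow (Suc p) {[b]}" using z pow_b by simp
    have 4: "(z1 @ z2) @ w \<in> theta_word v" using z w thv setcat_mem by fastforce
    have 5: "z1 @ z2 \<in> theta_pow (Suc p) {[a]}" unfolding pow_a using z setcat_mem by blast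
    have 6: "w \<in> theta_pow (Suc p) {[b]}" using wa pow_b by simp
    show ?case using 1 2 3 4 5 6 by blast
  next
    assume H: "s \<in> theta_pow p {[b]} \<and> t \<in> theta_pow p {[a]}"
    obtain w where w: "w \<in> theta_word s" using theta_word_ne by blast
    have wa: "w \<in> theta_pow p {[a]}" using pow_step[OF conjunct1[OF H] w] pow_b by simp
    from Suc.IH[OF conjunct2[OF H]] obtain z1 z2 where
      z: "z1 @ z2 \<in> theta_word t" "z1 \<in> theta_pow p {[b]}" "z2 \<in> theta_pow p {[a]}" by blast
    have 1: "w @ (z1 @ z2) \<in> theta_word v" using z w thv setcat_mem by fastforce
    have 2: "z1 @ z2 \<in> theta_pow (Suc p) {[a]}" unfolding pow_a using z setcat_mem by blast
    have 3: "w \<in> theta_pow (Suc p) {[b]}" using wa pow_b by simp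
    have 4: "(w @ z1) @ z2 \<in> theta_word v" using z w thv setcat_mem by fastforce
    have 5: "w @ z1 \<in> theta_pow (Suc p) {[a]}" unfolding pow_a using z wa setcat_mem by blast
    have 6: "z2 \<in> theta_pow (Suc p) {[b]}" using z pow_b by simp
    show ?case using 1 2 3 4 5 6 by blast
  qed
qed

lemma legal_sublist: "legal w \<Longrightarrow> sublist y w \<Longrightarrow> legal y"
  unfolding legal_def by (meson sublist_order.order_trans)

lemma legal_theta: "legal w \<Longrightarrow> y \<in> theta_word w \<Longrightarrow> legal y"
proof -
  assume "legal w" "y \<in> theta_word w"
  then obtain k x V where V: "V \<in> theta_pow k {[x]}" "sublist w V" unfolding legal_def by blast
  then obtain \<alpha> \<beta> where "V = \<alpha> @ w @ \<beta>" by (auto simp: sublist_def)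
  obtain \<alpha>' \<beta>' where "\<alpha>' \<in> theta_word \<alpha>" "\<beta>' \<in> theta_word \<beta>" using theta_word_ne by blast
  then have "\<alpha>' @ y @ \<beta>' \<in> theta_word V"
    using \<open>V = _\<close> \<open>y \<in> _\<close> by (simp add: theta_word_append setcat_mem)
  then have "\<alpha>' @ y @ \<beta>' \<in> theta_pow (Suc k) {[x]}" using pow_step V by blast
  then show "legal y" unfolding legal_def by (metis sublist_appendI)
qed

theorem mainTheorem3:
  fixes p :: nat and u :: word
  assumes "(\<exists>w \<in> setcat (theta_pow p {[a]}) (setcat {u} {[a, b]}). legal w)
         \<or> (\<exists>w \<in> setcat (theta_pow p {[a]}) (setcat {u} {[b, a]}). legal w)"
  shows "(\<exists>w \<in> setcat (theta_pow p {[a]}) (setcat (theta_word u) {[a, b]}). legal w)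
       \<and> (\<exists>w \<in> setcat (theta_pow p {[a]})
               (setcat (theta_word u) (setcat (theta_word [b]) {[b, a]})). legal w)"
proof -
  obtain v e where v: "v \<in> theta_pow p {[a]}" and e: "e = [a,b] \<or> e = [b,a]"
    and lw: "legal (v @ u @ e)"
    using assms unfolding setcat_def by blast
  have eth: "[a,b,a] \<in> theta_word e" using e by (auto simp: setcat_def)
  obtain z1 z2 where z: "z1 @ z2 \<in> theta_word v" "z2 \<in> theta_pow p {[a]}"
    using key[OF v] by blast
  obtain x where x: "x \<in> theta_word u" using theta_word_ne by blast
  have "(z1 @ z2) @ x @ [a,b,a] \<in> theta_word (v @ u @ e)"
  proof -
    have "x @ [a,b,a] \<in> theta_word (u @ e)"
      unfolding theta_word_append using x eth by (rule setcat_mem)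
    then have "(z1 @ z2) @ (x @ [a,b,a]) \<in> theta_word (v @ (u @ e))"
      unfolding theta_word_append[of v] by (rule setcat_mem[OF z(1)])
    then show ?thesis by simp
  qed
  then have L: "legal ((z1 @ z2) @ x @ [a,b,a])" using legal_theta lw by blast
  have L1: "legal (z2 @ x @ [a,b])"
    by (rule legal_sublist[OF L]) (unfold sublist_def, rule exI[of _ z1], rule exI[of _ "[a]"], simp)
  have L2: "legal (z2 @ x @ [a] @ [b,a])"
    by (rule legal_sublist[OF L]) (unfold sublist_def, rule exI[of _ z1], rule exI[of _ "[]"], simp)
  have m1: "z2 @ x @ [a,b] \<in> setcat (theta_pow p {[a]}) (setcat (theta_word u) {[a, b]})"
    by (rule setcat_mem[OF z(2) setcat_mem[OF x]]) simp
  have tb: "[a] \<in> theta_word [b]" by (simp add: setcat_def)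
  have m2: "z2 @ x @ [a] @ [b,a] \<in> setcat (theta_pow p {[a]})
               (setcat (theta_word u) (setcat (theta_word [b]) {[b, a]}))"
    by (rule setcat_mem[OF z(2) setcat_mem[OF x setcat_mem[OF tb]]]) simp
  show ?thesis using L1 L2 m1 m2 by blast
qed

end
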